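(* Let $(G=(V,E),w,k)$ be an instance of the Min-WED problem such that $0\le\min\{\min\{w(x):x\in V\},k\}$. Let $M=\max\{\sum_{x\in V}w(x),k\}+1$, let $w'(x)=M\cdot|N_G[x]|-w(x)$ for all $x\in V$, and let $k'=M\cdot|V|-k$. Then $(G,w,k)$ is a yes instance of the Min-WED problem if and only if $(G^2,w',k')$ is a yes instance of the MWIS problem.
   Context: All graphs are finite, simple and undirected. $N_G[x]$ is the closed neighborhood of $x$ in $G$ (the neighbors of $x$ together with $x$). A vertex dominates itself and its neighbors. An efficient dominating set of $G=(V,E)$ is a set $D\subseteq V$ such that every vertex of $V$ is dominated by exactly one vertex of $D$. The square $G^2=(V,E^2)$ has distinct $u,v$ adjacent iff $uv\in E$ or $u,v$ have a common neighbor in $G$. Min-WED: given $G=(V,E)$, $w:V\to\mathbb{Z}$ and an integer $k$, decide whether $G$ has an efficient dominating set $D$ with $\sum_{x\in D}w(x)\le k$. MWIS: given a graph $H$, weights $w':V(H)\to\mathbb{Z}$ and an integer $k'$, decide whether $H$ has an independent set $I$ with $\sum_{x\in I}w'(x)\ge k'$. *)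

theory Defs
  imports Main
begin

definition simple_graph :: "'a set \<Rightarrow> ('a \<Rightarrow> 'a \<Rightarrow> bool) \<Rightarrow> bool" where
  "simple_graph V E \<longleftrightarrow> finite V \<and>
     (\<forall>u v. E u v \<longrightarrow> u \<in> V \<and> v \<in> V \<and> u \<noteq> v \<and> E v u)"

definition closed_nbhd :: "'a set \<Rightarrow> ('a \<Rightarrow> 'a \<Rightarrow> bool) \<Rightarrow> 'a \<Rightarrow> 'a set" where
  "closed_nbhd V E x = {y \<in> V. y = x \<or> E x y}"

definition efficient_dom_set :: "'a set \<Rightarrow> ('a \<Rightarrow> 'a \<Rightarrow> bool) \<Rightarrow> 'a set \<Rightarrow> bool" where
  "efficient_dom_set V E D \<longleftrightarrow> D \<subseteq> V \<and>
     (\<forall>v\<in>V. card {d \<in> D. v \<in> closed_nbhd V E d} = 1)"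

definition square_edge :: "'a set \<Rightarrow> ('a \<Rightarrow> 'a \<Rightarrow> bool) \<Rightarrow> 'a \<Rightarrow> 'a \<Rightarrow> bool" where
  "square_edge V E u v \<longleftrightarrow> u \<noteq> v \<and> (E u v \<or> (\<exists>z\<in>V. E u z \<and> E z v))"

definition independent_set :: "'a set \<Rightarrow> ('a \<Rightarrow> 'a \<Rightarrow> bool) \<Rightarrow> 'a set \<Rightarrow> bool" where
  "independent_set V E I \<longleftrightarrow> I \<subseteq> V \<and> (\<forall>u\<in>I. \<forall>v\<in>I. \<not> E u v)"

definition min_wed_yes :: "'a set \<Rightarrow> ('a \<Rightarrow> 'a \<Rightarrow> bool) \<Rightarrow> ('a \<Rightarrow> int) \<Rightarrow> int \<Rightarrow> bool" where
  "min_wed_yes V E w k \<longleftrightarrow> (\<exists>D. efficient_dom_set V E D \<and> (\<Sum>x\<in>D. w x) \<le> k)"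

definition mwis_yes :: "'a set \<Rightarrow> ('a \<Rightarrow> 'a \<Rightarrow> bool) \<Rightarrow> ('a \<Rightarrow> int) \<Rightarrow> int \<Rightarrow> bool" where
  "mwis_yes V E w k \<longleftrightarrow> (\<exists>I. independent_set V E I \<and> (\<Sum>x\<in>I. w x) \<ge> k)"

end

theory Submission
  imports Defs
begin

lemma nb_sub: "closed_nbhd V E x \<subseteq> V"
  unfolding closed_nbhd_def by auto

lemma indep_iff:
  assumes g: "simple_graph V E" and IV: "I \<subseteq> V"
  shows "independent_set V (square_edge V E) I \<longleftrightarrow>
    (\<forall>u\<in>I. \<forall>v\<in>I. u \<noteq> v \<longrightarrow> closed_nbhd V E u \<inter> closed_nbhd V E v = {})"
proof -
  have sym: "\<And>u v. E u v \<Longrightarrow> E v u \<and> u \<in> V \<and> v \<in> V" using g unfolding simple_graph_def by blast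
  have "square_edge V E u v \<longleftrightarrow> u \<noteq> v \<and> closed_nbhd V E u \<inter> closed_nbhd V E v \<noteq> {}"
    if "u \<in> V" "v \<in> V" for u v
  proof
    assume "square_edge V E u v"
    then have ne: "u \<noteq> v" and h: "E u v \<or> (\<exists>z\<in>V. E u z \<and> E z v)"
      unfolding square_edge_def by auto
    from h have "\<exists>y. y \<in> closed_nbhd V E u \<and> y \<in> closed_nbhd V E v"
    proof
      assume "E u v" then show ?thesis unfolding closed_nbhd_def using that by auto
    next
      assume "\<exists>z\<in>V. E u z \<and> E z v"
      then obtain z where "z \<in> V" "E u z" "E z v" by blast
      moreover have "E v z" using sym[OF \<open>E z v\<close>] by blast
      ultimately show ?thesis unfolding closed_nbhd_def by auto
    qed
    then show "u \<noteq> v \<and> closed_nbhd V E u \<inter> closed_nbhd V E v \<noteq> {}" using ne by blast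
  next
    assume a: "u \<noteq> v \<and> closed_nbhd V E u \<inter> closed_nbhd V E v \<noteq> {}"
    then obtain y where yV: "y \<in> V" and yu: "y = u \<or> E u y" and yv: "y = v \<or> E v y"
      unfolding closed_nbhd_def by blast
    show "square_edge V E u v"
    proof (cases "y = u")
      case True
      then have "E v u" using yv a by blast
      then have "E u v" using sym by blast
      then show ?thesis unfolding square_edge_def using a by blast
    next
      case False
      then have euy: "E u y" using yu by blast
      show ?thesis
      proof (cases "y = v")
        case True then show ?thesis unfolding square_edge_def using a euy by blast
      next
        case False
        then have "E y v" using yv sym by blast
        then show ?thesis unfolding square_edge_def using a euy yV by blast
      qed
    qed
  qed
  then show ?thesis unfolding independent_set_def using IV by blast
qed

lemma eff_iff:
  assumes DV: "D \<subseteq> V"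
  shows "efficient_dom_set V E D \<longleftrightarrow>
    (\<forall>u\<in>D. \<forall>v\<in>D. u \<noteq> v \<longrightarrow> closed_nbhd V E u \<inter> closed_nbhd V E v = {})
     \<and> (\<Union>d\<in>D. closed_nbhd V E d) = V"
proof
  assume e: "efficient_dom_set V E D"
  have c: "\<And>v. v \<in> V \<Longrightarrow> card {d \<in> D. v \<in> closed_nbhd V E d} = 1"
    using e unfolding efficient_dom_set_def by blast
  have dis: "\<forall>u\<in>D. \<forall>v\<in>D. u \<noteq> v \<longrightarrow> closed_nbhd V E u \<inter> closed_nbhd V E v = {}"
  proof (intro ballI impI)
    fix u v assume "u \<in> D" "v \<in> D" "u \<noteq> v"
    show "closed_nbhd V E u \<inter> closed_nbhd V E v = {}"
    proof (rule ccontr)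
      assume "closed_nbhd V E u \<inter> closed_nbhd V E v \<noteq> {}"
      then obtain y where y: "y \<in> closed_nbhd V E u" "y \<in> closed_nbhd V E v" by blast
      then have yV: "y \<in> V" unfolding closed_nbhd_def by blast
      from c[OF yV] obtain z where "{d \<in> D. y \<in> closed_nbhd V E d} = {z}"
        by (rule card_1_singletonE)
      moreover have "u \<in> {d \<in> D. y \<in> closed_nbhd V E d}" "v \<in> {d \<in> D. y \<in> closed_nbhd V E d}"
        using y \<open>u \<in> D\<close> \<open>v \<in> D\<close> by auto
      ultimately show False using \<open>u \<noteq> v\<close> by simp
    qed
  qed
  have "(\<Union>d\<in>D. closed_nbhd V E d) = V"
  proof
    show "(\<Union>d\<in>D. closed_nbhd V E d) \<subseteq> V" unfolding closed_nbhd_def by blast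
    show "V \<subseteq> (\<Union>d\<in>D. closed_nbhd V E d)"
    proof
      fix v assume "v \<in> V"
      from c[OF this] obtain z where "{d \<in> D. v \<in> closed_nbhd V E d} = {z}"
        by (rule card_1_singletonE)
      then have "z \<in> {d \<in> D. v \<in> closed_nbhd V E d}" by simp
      then show "v \<in> (\<Union>d\<in>D. closed_nbhd V E d)" by blast
    qed
  qed
  with dis show "(\<forall>u\<in>D. \<forall>v\<in>D. u \<noteq> v \<longrightarrow> closed_nbhd V E u \<inter> closed_nbhd V E v = {})
     \<and> (\<Union>d\<in>D. closed_nbhd V E d) = V" by blast
next
  assume a: "(\<forall>u\<in>D. \<forall>v\<in>D. u \<noteq> v \<longrightarrow> closed_nbhd V E u \<inter> closed_nbhd V E v = {})
     \<and> (\<Union>d\<in>D. closed_nbhd V E d) = V"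
  have "card {d \<in> D. v \<in> closed_nbhd V E d} = 1" if "v \<in> V" for v
  proof -
    have "v \<in> (\<Union>d\<in>D. closed_nbhd V E d)" using a that by simp
    then obtain z where z: "z \<in> D" "v \<in> closed_nbhd V E z" by blast
    have "{d \<in> D. v \<in> closed_nbhd V E d} = {z}"
    proof (intro equalityI subsetI)
      fix d assume "d \<in> {d \<in> D. v \<in> closed_nbhd V E d}"
      then have d: "d \<in> D" "v \<in> closed_nbhd V E d" by auto
      show "d \<in> {z}"
      proof (rule ccontr)
        assume "d \<notin> {z}"
        then have "closed_nbhd V E d \<inter> closed_nbhd V E z = {}" using a d z by auto
        then show False using d z by blast
      qed
    next
      fix d assume "d \<in> {z}" then show "d \<in> {d \<in> D. v \<in> closed_nbhd V E d}" using z by simp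
    qed
    then show ?thesis by simp
  qed
  then show "efficient_dom_set V E D" unfolding efficient_dom_set_def using DV by blast
qed

lemma sum_card:
  assumes g: "simple_graph V E" and DV: "D \<subseteq> V"
    and dis: "\<forall>u\<in>D. \<forall>v\<in>D. u \<noteq> v \<longrightarrow> closed_nbhd V E u \<inter> closed_nbhd V E v = {}"
  shows "(\<Sum>d\<in>D. card (closed_nbhd V E d)) = card (\<Union>d\<in>D. closed_nbhd V E d)"
proof -
  have fV: "finite V" using g unfolding simple_graph_def by blast
  have fD: "finite D" using DV fV by (rule finite_subset)
  have "\<And>d. finite (closed_nbhd V E d)" using nb_sub[of V E] fV finite_subset by metis
  then show ?thesis using card_UN_disjoint[OF fD, of "closed_nbhd V E"] dis by simp
qed

theorem lemma5:
  fixes V :: "'a set" and E :: "'a \<Rightarrow> 'a \<Rightarrow> bool" and w :: "'a \<Rightarrow> int" and k :: int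
  assumes "simple_graph V E"
    and "\<forall>x\<in>V. 0 \<le> w x"
    and "0 \<le> k"
  defines "M \<equiv> max (\<Sum>x\<in>V. w x) k + 1"
  defines "w' \<equiv> (\<lambda>x. M * int (card (closed_nbhd V E x)) - w x)"
  defines "k' \<equiv> M * int (card V) - k"
  shows "min_wed_yes V E w k \<longleftrightarrow> mwis_yes V (square_edge V E) w' k'"
proof -
  have fV: "finite V" using assms(1) unfolding simple_graph_def by blast
  have Mk: "M > k" unfolding M_def by simp
  have sw: "\<And>I. (\<Sum>x\<in>I. w' x) = M * int (\<Sum>x\<in>I. card (closed_nbhd V E x)) - (\<Sum>x\<in>I. w x)"
    unfolding w'_def by (simp add: sum_subtractf sum_distrib_left)
  show ?thesis
  proof
    assume "min_wed_yes V E w k"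
    then obtain D where e: "efficient_dom_set V E D" and s: "(\<Sum>x\<in>D. w x) \<le> k"
      unfolding min_wed_yes_def by blast
    have DV: "D \<subseteq> V" using e unfolding efficient_dom_set_def by blast
    note ee = e[unfolded eff_iff[OF DV]]
    have "(\<Sum>d\<in>D. card (closed_nbhd V E d)) = card V"
      using sum_card[OF assms(1) DV] ee by simp
    then have "(\<Sum>x\<in>D. w' x) \<ge> k'" using sw[of D] s unfolding k'_def by simp
    moreover have "independent_set V (square_edge V E) D"
      using indep_iff[OF assms(1) DV] ee by blast
    ultimately show "mwis_yes V (square_edge V E) w' k'" unfolding mwis_yes_def by blast
  next
    assume "mwis_yes V (square_edge V E) w' k'"
    then obtain I where i: "independent_set V (square_edge V E) I" and s: "(\<Sum>x\<in>I. w' x) \<ge> k'"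
      unfolding mwis_yes_def by blast
    have IV: "I \<subseteq> V" using i unfolding independent_set_def by blast
    have dis: "\<forall>u\<in>I. \<forall>v\<in>I. u \<noteq> v \<longrightarrow> closed_nbhd V E u \<inter> closed_nbhd V E v = {}"
      using indep_iff[OF assms(1) IV] i by blast
    have U: "(\<Union>d\<in>I. closed_nbhd V E d) \<subseteq> V" unfolding closed_nbhd_def by blast
    have sc: "(\<Sum>d\<in>I. card (closed_nbhd V E d)) = card (\<Union>d\<in>I. closed_nbhd V E d)"
      using sum_card[OF assms(1) IV dis] .
    have wI: "(\<Sum>x\<in>I. w x) \<ge> 0" using assms(2) IV by (meson subsetD sum_nonneg)
    have eq: "(\<Union>d\<in>I. closed_nbhd V E d) = V"
    proof (rule ccontr)
      assume "(\<Union>d\<in>I. closed_nbhd V E d) \<noteq> V"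
      then have "card (\<Union>d\<in>I. closed_nbhd V E d) < card V"
        using U fV by (simp add: psubset_card_mono psubsetI)
      then have le: "int (\<Sum>d\<in>I. card (closed_nbhd V E d)) \<le> int (card V) - 1" using sc by simp
      have Mpos: "M > 0" using Mk assms(3) by simp
      have "M * int (\<Sum>d\<in>I. card (closed_nbhd V E d)) \<le> M * (int (card V) - 1)"
        using le Mpos by (simp add: mult_left_mono)
      then have "(\<Sum>x\<in>I. w' x) \<le> M * int (card V) - M" using sw[of I] wI by (simp add: algebra_simps)
      then show False using s Mk unfolding k'_def by simp
    qed
    have "efficient_dom_set V E I" using eff_iff[OF IV] dis eq by blast
    moreover have "(\<Sum>x\<in>I. w x) \<le> k"
      using sw[of I] s sc eq unfolding k'_def by simp
    ultimately show "min_wed_yes V E w k" unfolding min_wed_yes_def by blast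
  qed
qed

end
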